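(* A graph $G$ admits a full $C_5$-colouring if and only if $G$ has no induced subgraph isomorphic to $C_3$, to $K_1+P_4$, or to $2K_2$.
   Context: All graphs are finite, simple and loopless. $P_n$ and $C_n$ denote the path and cycle on $n$ vertices; $+$ denotes disjoint union and $2K_2$ is the disjoint union of two edges. A full $C_5$-colouring of $G$ is a map $\varphi\colon V(G)\to V(C_5)$ such that for all $x,y\in V(G)$, $xy\in E(G)$ if and only if $\varphi(x)\varphi(y)\in E(C_5)$. *)

theory Defs
  imports Main
begin

type_synonym 'a graph = "'a set \<times> ('a \<Rightarrow> 'a \<Rightarrow> bool)"

definition verts :: "'a graph \<Rightarrow> 'a set" where "verts G = fst G"
definition adj :: "'a graph \<Rightarrow> 'a \<Rightarrow> 'a \<Rightarrow> bool" where "adj G = snd G"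

definition simple_graph :: "'a graph \<Rightarrow> bool" where
  "simple_graph G \<longleftrightarrow> finite (verts G)
     \<and> (\<forall>x y. adj G x y \<longrightarrow> x \<in> verts G \<and> y \<in> verts G)
     \<and> (\<forall>x y. adj G x y \<longrightarrow> adj G y x)
     \<and> (\<forall>x. \<not> adj G x x)"

definition path_graph :: "nat \<Rightarrow> nat graph" where
  "path_graph n = ({0..<n}, \<lambda>i j. i < n \<and> j < n \<and> (j = i + 1 \<or> i = j + 1))"

definition cycle_graph :: "nat \<Rightarrow> nat graph" where
  "cycle_graph n = ({0..<n}, \<lambda>i j. i < n \<and> j < n \<and> (j = Suc i mod n \<or> i = Suc j mod n) \<and> i \<noteq> j)"

definition complete_graph :: "nat \<Rightarrow> nat graph" where
  "complete_graph n = ({0..<n}, \<lambda>i j. i < n \<and> j < n \<and> i \<noteq> j)"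

definition disj_union :: "'a graph \<Rightarrow> 'b graph \<Rightarrow> ('a + 'b) graph" where
  "disj_union G H = (verts G <+> verts H,
     \<lambda>u v. case (u, v) of (Inl x, Inl y) \<Rightarrow> adj G x y
                       | (Inr x, Inr y) \<Rightarrow> adj H x y
                       | _ \<Rightarrow> False)"

definition has_induced :: "'a graph \<Rightarrow> 'b graph \<Rightarrow> bool" where
  "has_induced G H \<longleftrightarrow> (\<exists>f. inj_on f (verts H) \<and> f ` verts H \<subseteq> verts G
      \<and> (\<forall>x\<in>verts H. \<forall>y\<in>verts H. adj G (f x) (f y) \<longleftrightarrow> adj H x y))"

definition full_C5_colouring :: "'a graph \<Rightarrow> ('a \<Rightarrow> nat) \<Rightarrow> bool" where
  "full_C5_colouring G \<phi> \<longleftrightarrow> (\<forall>x\<in>verts G. \<phi> x \<in> verts (cycle_graph 5))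
      \<and> (\<forall>x\<in>verts G. \<forall>y\<in>verts G. adj G x y \<longleftrightarrow> adj (cycle_graph 5) (\<phi> x) (\<phi> y))"

end

theory Submission imports Defs begin

abbreviation c5 :: "nat \<Rightarrow> nat \<Rightarrow> bool" where "c5 \<equiv> adj (cycle_graph 5)"

lemma c5_iff: "c5 i j \<longleftrightarrow> (i=0\<and>j=1) \<or> (i=1\<and>j=0) \<or> (i=1\<and>j=2) \<or> (i=2\<and>j=1) \<or> (i=2\<and>j=3)
  \<or> (i=3\<and>j=2) \<or> (i=3\<and>j=4) \<or> (i=4\<and>j=3) \<or> (i=4\<and>j=0) \<or> (i=0\<and>j=4)"
proof -
  have "c5 i j \<longleftrightarrow> i < 5 \<and> j < 5 \<and> (j = Suc i mod 5 \<or> i = Suc j mod 5) \<and> i \<noteq> j"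
    by (simp add: adj_def cycle_graph_def)
  also have "\<dots> \<longleftrightarrow> (i=0\<and>j=1) \<or> (i=1\<and>j=0) \<or> (i=1\<and>j=2) \<or> (i=2\<and>j=1) \<or> (i=2\<and>j=3)
  \<or> (i=3\<and>j=2) \<or> (i=3\<and>j=4) \<or> (i=4\<and>j=3) \<or> (i=4\<and>j=0) \<or> (i=0\<and>j=4)" (is "?L \<longleftrightarrow> ?R")
  proof
    assume ?L
    then have "i \<in> {0,1,2,3,4}" "j \<in> {0,1,2,3,4}" by auto
    then show ?R using \<open>?L\<close> by (elim insertE; simp)
  next
    assume ?R then show ?L by auto
  qed
  finally show ?thesis .
qed
lemma c5_2k2': "c5 i j \<Longrightarrow> c5 k l \<Longrightarrow> c5 i k \<or> c5 i l \<or> c5 j k \<or> c5 j l"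
  unfolding c5_iff[of i j] c5_iff[of k l] by (elim disjE conjE; simp add: c5_iff)
lemma c5_tri': "c5 i j \<Longrightarrow> c5 j k \<Longrightarrow> \<not> c5 i k"
  unfolding c5_iff[of i j] c5_iff[of j k] by (elim disjE conjE; simp add: c5_iff)
lemma c5_p4: "c5 a b \<Longrightarrow> c5 b c \<Longrightarrow> c5 c d \<Longrightarrow> \<not> c5 a c \<Longrightarrow> \<not> c5 b d \<Longrightarrow> \<not> c5 a d \<Longrightarrow>
  (a,b,c,d) \<in> {(0,1,2,3),(1,2,3,4),(2,3,4,0),(3,4,0,1),(4,0,1,2),(3,2,1,0),(4,3,2,1),(0,4,3,2),(1,0,4,3),(2,1,0,4)}"
  unfolding c5_iff[of a b] by (elim disjE conjE; simp add: c5_iff)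
lemma c5_kp': "c5 a b \<Longrightarrow> c5 b c \<Longrightarrow> c5 c d \<Longrightarrow> \<not> c5 a c \<Longrightarrow> \<not> c5 b d \<Longrightarrow> \<not> c5 a d \<Longrightarrow> e < 5 \<Longrightarrow>
  c5 e a \<or> c5 e b \<or> c5 e c \<or> c5 e d"
  apply (drule (5) c5_p4)
  apply (subgoal_tac "e = 0 \<or> e = 1 \<or> e = 2 \<or> e = 3 \<or> e = 4")
   apply (elim disjE insertE; simp add: c5_iff)
  by auto

lemma tri_ind:
  assumes "simple_graph G" "adj G x y" "adj G y z" "adj G x z"
  shows "has_induced G (cycle_graph 3)"
proof -
  from assms have d: "x \<noteq> y" "y \<noteq> z" "x \<noteq> z" "x \<in> verts G" "y \<in> verts G" "z \<in> verts G"
    unfolding simple_graph_def by metis+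
  have s: "\<And>u v. adj G u v = adj G v u" using assms(1) unfolding simple_graph_def by blast
  define f where "f = (\<lambda>i::nat. if i = 0 then x else if i = 1 then y else z)"
  have V: "verts (cycle_graph 3) = {0,1,2}" by (auto simp: cycle_graph_def verts_def)
  have A: "adj (cycle_graph 3) = (\<lambda>i j. i < 3 \<and> j < 3 \<and> (j = Suc i mod 3 \<or> i = Suc j mod 3) \<and> i \<noteq> j)"
    by (simp add: cycle_graph_def adj_def)
  show ?thesis unfolding has_induced_def V A
    apply (rule exI[of _ f])
    using d assms s assms(1) unfolding simple_graph_def by (auto simp: f_def inj_on_def)
qed

lemma k2_ind:
  assumes "simple_graph G" "adj G a b" "adj G c d" "\<not> adj G a c" "\<not> adj G a d" "\<not> adj G b c" "\<not> adj G b d"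
  shows "has_induced G (disj_union (complete_graph 2) (complete_graph 2))"
proof -
  have s: "\<And>u v. adj G u v = adj G v u" using assms(1) unfolding simple_graph_def by blast
  have irr: "\<And>u. \<not> adj G u u" using assms(1) unfolding simple_graph_def by blast
  have m: "\<And>u v. adj G u v \<Longrightarrow> u \<in> verts G \<and> v \<in> verts G" using assms(1) unfolding simple_graph_def by blast
  define f where "f = (\<lambda>i::nat+nat. case i of Inl k \<Rightarrow> (if k = 0 then a else b) | Inr k \<Rightarrow> (if k = 0 then c else d))"
  have V: "verts (disj_union (complete_graph 2) (complete_graph 2)) = {Inl 0, Inl 1, Inr 0, Inr 1}"
    by (auto simp: disj_union_def complete_graph_def verts_def)
  have A: "adj (disj_union (complete_graph 2) (complete_graph 2)) = (\<lambda>u v. case (u, v) of (Inl x, Inl y) \<Rightarrow> x < 2 \<and> y < 2 \<and> x \<noteq> y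
                       | (Inr x, Inr y) \<Rightarrow> x < 2 \<and> y < 2 \<and> x \<noteq> y
                       | _ \<Rightarrow> False)"
    unfolding disj_union_def complete_graph_def adj_def by (simp add: fun_eq_iff split: sum.splits)
  show ?thesis unfolding has_induced_def V A
    apply (rule exI[of _ f])
    using assms s irr m[OF assms(2)] m[OF assms(3)]
    by (auto simp: f_def inj_on_def)
qed

lemma kp_ind:
  assumes "simple_graph G" "adj G a b" "adj G b c" "adj G c d" "\<not> adj G a c" "\<not> adj G b d" "\<not> adj G a d"
    "e \<in> verts G" "\<not> adj G e a" "\<not> adj G e b" "\<not> adj G e c" "\<not> adj G e d"
  shows "has_induced G (disj_union (complete_graph 1) (path_graph 4))"
proof -
  have s: "\<And>u v. adj G u v = adj G v u" using assms(1) unfolding simple_graph_def by blast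
  have irr: "\<And>u. \<not> adj G u u" using assms(1) unfolding simple_graph_def by blast
  have m: "\<And>u v. adj G u v \<Longrightarrow> u \<in> verts G \<and> v \<in> verts G" using assms(1) unfolding simple_graph_def by blast
  define f where "f = (\<lambda>i::nat+nat. case i of Inl k \<Rightarrow> e | Inr k \<Rightarrow> (if k = 0 then a else if k = 1 then b else if k = 2 then c else d))"
  have V: "verts (disj_union (complete_graph 1) (path_graph 4)) = {Inl 0, Inr 0, Inr 1, Inr 2, Inr 3}"
    by (auto simp: disj_union_def complete_graph_def path_graph_def verts_def)
  have A: "adj (disj_union (complete_graph 1) (path_graph 4)) = (\<lambda>u v. case (u, v) of (Inl x, Inl y) \<Rightarrow> x < 1 \<and> y < 1 \<and> x \<noteq> y
                       | (Inr i, Inr j) \<Rightarrow> i < 4 \<and> j < 4 \<and> (j = i + 1 \<or> i = j + 1)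
                       | _ \<Rightarrow> False)"
    unfolding disj_union_def complete_graph_def path_graph_def adj_def by (simp add: fun_eq_iff split: sum.splits)
  show ?thesis unfolding has_induced_def V A
    apply (rule exI[of _ f])
    using assms s irr m[OF assms(2)] m[OF assms(4)]
    by (auto simp: f_def inj_on_def)
qed


lemma ind_col:
  assumes "full_C5_colouring G \<phi>" "has_induced G H"
  shows "\<exists>\<psi>. (\<forall>x\<in>verts H. \<psi> x < 5) \<and> (\<forall>x\<in>verts H. \<forall>y\<in>verts H. adj H x y \<longleftrightarrow> c5 (\<psi> x) (\<psi> y))"
proof -
  obtain f where f: "f ` verts H \<subseteq> verts G" "\<forall>x\<in>verts H. \<forall>y\<in>verts H. adj G (f x) (f y) \<longleftrightarrow> adj H x y"
    using assms(2) unfolding has_induced_def by blast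
  have V5: "verts (cycle_graph 5) = {0..<5}" by (simp add: cycle_graph_def verts_def)
  show ?thesis
    apply (rule exI[of _ "\<phi> \<circ> f"])
    using f assms(1) unfolding full_C5_colouring_def V5 by (auto simp: image_subset_iff)
qed

lemma no_c3: "\<not> (\<exists>\<psi>. (\<forall>x\<in>verts (cycle_graph 3). \<psi> x < 5) \<and> (\<forall>x\<in>verts (cycle_graph 3). \<forall>y\<in>verts (cycle_graph 3).
   adj (cycle_graph 3) x y \<longleftrightarrow> c5 (\<psi> x) (\<psi> y)))"
proof
  assume "\<exists>\<psi>. (\<forall>x\<in>verts (cycle_graph 3). \<psi> x < 5) \<and> (\<forall>x\<in>verts (cycle_graph 3). \<forall>y\<in>verts (cycle_graph 3).
   adj (cycle_graph 3) x y \<longleftrightarrow> c5 (\<psi> x) (\<psi> y))"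
  then obtain \<psi> where p: "\<forall>x\<in>verts (cycle_graph 3). \<forall>y\<in>verts (cycle_graph 3).
   adj (cycle_graph 3) x y \<longleftrightarrow> c5 (\<psi> x) (\<psi> y)" by blast
  have V: "verts (cycle_graph 3) = {0,1,2}" by (auto simp: cycle_graph_def verts_def)
  have A: "adj (cycle_graph 3) = (\<lambda>i j. i < 3 \<and> j < 3 \<and> (j = Suc i mod 3 \<or> i = Suc j mod 3) \<and> i \<noteq> j)"
    by (simp add: cycle_graph_def adj_def)
  from p have "c5 (\<psi> 0) (\<psi> 1)" "c5 (\<psi> 1) (\<psi> 2)" "c5 (\<psi> 0) (\<psi> 2)" unfolding V A by auto
  then show False using c5_tri' by blast
qed

lemma no_2k2: "\<not> (\<exists>\<psi>. (\<forall>x\<in>verts (disj_union (complete_graph 2) (complete_graph 2)). \<psi> x < 5) \<and>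
   (\<forall>x\<in>verts (disj_union (complete_graph 2) (complete_graph 2)). \<forall>y\<in>verts (disj_union (complete_graph 2) (complete_graph 2)).
   adj (disj_union (complete_graph 2) (complete_graph 2)) x y \<longleftrightarrow> c5 (\<psi> x) (\<psi> y)))"
  (is "\<not> (\<exists>\<psi>. _ \<and> (\<forall>x\<in>verts ?H. \<forall>y\<in>verts ?H. _))")
proof
  have V: "verts ?H = {Inl 0, Inl 1, Inr 0, Inr 1}"
    by (auto simp: disj_union_def complete_graph_def verts_def)
  have A: "adj ?H = (\<lambda>u v. case (u, v) of (Inl x, Inl y) \<Rightarrow> x < 2 \<and> y < 2 \<and> x \<noteq> y
                       | (Inr x, Inr y) \<Rightarrow> x < 2 \<and> y < 2 \<and> x \<noteq> y
                       | _ \<Rightarrow> False)"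
    unfolding disj_union_def complete_graph_def adj_def by (simp add: fun_eq_iff split: sum.splits)
  assume "\<exists>\<psi>. (\<forall>x\<in>verts ?H. \<psi> x < 5) \<and> (\<forall>x\<in>verts ?H. \<forall>y\<in>verts ?H. adj ?H x y \<longleftrightarrow> c5 (\<psi> x) (\<psi> y))"
  then obtain \<psi> where p: "\<And>x y. x \<in> verts ?H \<Longrightarrow> y \<in> verts ?H \<Longrightarrow> adj ?H x y \<longleftrightarrow> c5 (\<psi> x) (\<psi> y)" by blast
  have m: "Inl 0 \<in> verts ?H" "Inl 1 \<in> verts ?H" "Inr 0 \<in> verts ?H" "Inr 1 \<in> verts ?H" unfolding V by simp_all
  have "c5 (\<psi> (Inl 0)) (\<psi> (Inl 1))" using p[OF m(1) m(2)] unfolding A by simp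
  moreover have "c5 (\<psi> (Inr 0)) (\<psi> (Inr 1))" using p[OF m(3) m(4)] unfolding A by simp
  moreover have "\<not> c5 (\<psi> (Inl 0)) (\<psi> (Inr 0))" using p[OF m(1) m(3)] unfolding A by simp
  moreover have "\<not> c5 (\<psi> (Inl 0)) (\<psi> (Inr 1))" using p[OF m(1) m(4)] unfolding A by simp
  moreover have "\<not> c5 (\<psi> (Inl 1)) (\<psi> (Inr 0))" using p[OF m(2) m(3)] unfolding A by simp
  moreover have "\<not> c5 (\<psi> (Inl 1)) (\<psi> (Inr 1))" using p[OF m(2) m(4)] unfolding A by simp
  ultimately show False using c5_2k2' by blast
qed

lemma no_kp: "\<not> (\<exists>\<psi>. (\<forall>x\<in>verts (disj_union (complete_graph 1) (path_graph 4)). \<psi> x < 5) \<and>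
   (\<forall>x\<in>verts (disj_union (complete_graph 1) (path_graph 4)). \<forall>y\<in>verts (disj_union (complete_graph 1) (path_graph 4)).
   adj (disj_union (complete_graph 1) (path_graph 4)) x y \<longleftrightarrow> c5 (\<psi> x) (\<psi> y)))"
  (is "\<not> (\<exists>\<psi>. _ \<and> (\<forall>x\<in>verts ?H. \<forall>y\<in>verts ?H. _))")
proof
  have V: "verts ?H = {Inl 0, Inr 0, Inr 1, Inr 2, Inr 3}"
    by (auto simp: disj_union_def complete_graph_def path_graph_def verts_def)
  have A: "adj ?H = (\<lambda>u v. case (u, v) of (Inl x, Inl y) \<Rightarrow> x < 1 \<and> y < 1 \<and> x \<noteq> y
                       | (Inr i, Inr j) \<Rightarrow> i < 4 \<and> j < 4 \<and> (j = i + 1 \<or> i = j + 1)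
                       | _ \<Rightarrow> False)"
    unfolding disj_union_def complete_graph_def path_graph_def adj_def by (simp add: fun_eq_iff split: sum.splits)
  assume "\<exists>\<psi>. (\<forall>x\<in>verts ?H. \<psi> x < 5) \<and> (\<forall>x\<in>verts ?H. \<forall>y\<in>verts ?H. adj ?H x y \<longleftrightarrow> c5 (\<psi> x) (\<psi> y))"
  then obtain \<psi> where p0: "\<And>x. x \<in> verts ?H \<Longrightarrow> \<psi> x < 5"
    and p: "\<And>x y. x \<in> verts ?H \<Longrightarrow> y \<in> verts ?H \<Longrightarrow> adj ?H x y \<longleftrightarrow> c5 (\<psi> x) (\<psi> y)" by blast
  have m: "Inl 0 \<in> verts ?H" "Inr 0 \<in> verts ?H" "Inr 1 \<in> verts ?H" "Inr 2 \<in> verts ?H" "Inr 3 \<in> verts ?H"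
    unfolding V by simp_all
  have "c5 (\<psi> (Inr 0)) (\<psi> (Inr 1))" using p[OF m(2) m(3)] unfolding A by simp
  moreover have "c5 (\<psi> (Inr 1)) (\<psi> (Inr 2))" using p[OF m(3) m(4)] unfolding A by simp
  moreover have "c5 (\<psi> (Inr 2)) (\<psi> (Inr 3))" using p[OF m(4) m(5)] unfolding A by simp
  moreover have "\<not> c5 (\<psi> (Inr 0)) (\<psi> (Inr 2))" using p[OF m(2) m(4)] unfolding A by simp
  moreover have "\<not> c5 (\<psi> (Inr 1)) (\<psi> (Inr 3))" using p[OF m(3) m(5)] unfolding A by simp
  moreover have "\<not> c5 (\<psi> (Inr 0)) (\<psi> (Inr 3))" using p[OF m(2) m(5)] unfolding A by simp
  moreover have "\<not> c5 (\<psi> (Inl 0)) (\<psi> (Inr 0))" using p[OF m(1) m(2)] unfolding A by simp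
  moreover have "\<not> c5 (\<psi> (Inl 0)) (\<psi> (Inr 1))" using p[OF m(1) m(3)] unfolding A by simp
  moreover have "\<not> c5 (\<psi> (Inl 0)) (\<psi> (Inr 2))" using p[OF m(1) m(4)] unfolding A by simp
  moreover have "\<not> c5 (\<psi> (Inl 0)) (\<psi> (Inr 3))" using p[OF m(1) m(5)] unfolding A by simp
  moreover have "\<psi> (Inl 0) < 5" using p0[OF m(1)] .
  ultimately show False using c5_kp' by blast
qed

theorem corollary3p11:
  fixes G :: "'a graph"
  assumes "simple_graph G"
  shows "(\<exists>\<phi>. full_C5_colouring G \<phi>) \<longleftrightarrow>
     \<not> has_induced G (cycle_graph 3)
   \<and> \<not> has_induced G (disj_union (complete_graph 1) (path_graph 4))
   \<and> \<not> has_induced G (disj_union (complete_graph 2) (complete_graph 2))"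
proof
  assume "\<exists>\<phi>. full_C5_colouring G \<phi>"
  then obtain \<phi> where "full_C5_colouring G \<phi>" by blast
  then show "\<not> has_induced G (cycle_graph 3)
   \<and> \<not> has_induced G (disj_union (complete_graph 1) (path_graph 4))
   \<and> \<not> has_induced G (disj_union (complete_graph 2) (complete_graph 2))"
    using ind_col no_c3 no_2k2 no_kp by metis
next
  assume H: "\<not> has_induced G (cycle_graph 3)
   \<and> \<not> has_induced G (disj_union (complete_graph 1) (path_graph 4))
   \<and> \<not> has_induced G (disj_union (complete_graph 2) (complete_graph 2))"
  define E where "E = adj G"
  define V where "V = verts G"
  have sym: "\<And>u v. E u v = E v u" using assms unfolding simple_graph_def E_def by blast
  have irr: "\<And>u. \<not> E u u" using assms unfolding simple_graph_def E_def by blast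
  have mem: "\<And>u v. E u v \<Longrightarrow> u \<in> V \<and> v \<in> V" using assms unfolding simple_graph_def E_def V_def by blast
  have NT: "\<And>x y z. E x y \<Longrightarrow> E y z \<Longrightarrow> E x z \<Longrightarrow> False"
    using H tri_ind[OF assms] unfolding E_def by blast
  have N2: "\<And>a b c d. E a b \<Longrightarrow> E c d \<Longrightarrow> E a c \<or> E a d \<or> E b c \<or> E b d"
    using H k2_ind[OF assms] unfolding E_def by blast
  have NK: "\<And>a b c d e. E a b \<Longrightarrow> E b c \<Longrightarrow> E c d \<Longrightarrow> \<not> E a c \<Longrightarrow> \<not> E b d \<Longrightarrow> \<not> E a d \<Longrightarrow> e \<in> V
     \<Longrightarrow> E e a \<or> E e b \<or> E e c \<or> E e d"
    using H kp_ind[OF assms] unfolding E_def V_def by blast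
  have V5: "verts (cycle_graph 5) = {0..<5}" by (simp add: cycle_graph_def verts_def)
  have goal: "\<exists>\<phi>. (\<forall>x\<in>V. \<phi> x < 5) \<and> (\<forall>x\<in>V. \<forall>y\<in>V. E x y \<longleftrightarrow> c5 (\<phi> x) (\<phi> y))"
  proof (cases "\<exists>a b c d. E a b \<and> E b c \<and> E c d \<and> \<not> E a c \<and> \<not> E b d \<and> \<not> E a d")
    case True
    then obtain a b c d where P: "E a b" "E b c" "E c d" "\<not> E a c" "\<not> E b d" "\<not> E a d" by blast
    have Pm: "a \<in> V" "b \<in> V" "c \<in> V" "d \<in> V" using mem P by blast+
    define \<phi> where "\<phi> x = (if E x a then (if E x c then 1 else 4) else if E x d then 2 else if E x b then 0 else (3::nat))" for x
    have pat: "(\<phi> x = 0 \<and> E x b \<and> \<not> E x a \<and> \<not> E x c \<and> \<not> E x d) \<or>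
               (\<phi> x = 1 \<and> E x a \<and> E x c \<and> \<not> E x b \<and> \<not> E x d) \<or>
               (\<phi> x = 2 \<and> E x b \<and> E x d \<and> \<not> E x a \<and> \<not> E x c) \<or>
               (\<phi> x = 3 \<and> E x c \<and> \<not> E x a \<and> \<not> E x b \<and> \<not> E x d) \<or>
               (\<phi> x = 4 \<and> E x a \<and> E x d \<and> \<not> E x b \<and> \<not> E x c)" if "x \<in> V" for x
      using NT[of x a b] NT[of x b c] NT[of x c d] N2[of x a c d] N2[of x d a b] NK[of a b c d x] P that
      unfolding \<phi>_def by (auto simp: sym)
    show ?thesis
    proof (rule exI[of _ \<phi>], intro conjI ballI)
      fix x assume "x \<in> V" then show "\<phi> x < 5" unfolding \<phi>_def by auto
    next
      fix x y assume xy: "x \<in> V" "y \<in> V"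
      have px: "(\<phi> x = 0 \<and> \<not> E x a \<and> E x b \<and> \<not> E x c \<and> \<not> E x d) \<or> (\<phi> x = 1 \<and> E x a \<and> \<not> E x b \<and> E x c \<and> \<not> E x d) \<or> (\<phi> x = 2 \<and> \<not> E x a \<and> E x b \<and> \<not> E x c \<and> E x d) \<or> (\<phi> x = 3 \<and> \<not> E x a \<and> \<not> E x b \<and> E x c \<and> \<not> E x d) \<or> (\<phi> x = 4 \<and> E x a \<and> \<not> E x b \<and> \<not> E x c \<and> E x d)" using pat[OF xy(1)] by blast
      have py: "(\<phi> y = 0 \<and> \<not> E y a \<and> E y b \<and> \<not> E y c \<and> \<not> E y d) \<or> (\<phi> y = 1 \<and> E y a \<and> \<not> E y b \<and> E y c \<and> \<not> E y d) \<or> (\<phi> y = 2 \<and> \<not> E y a \<and> E y b \<and> \<not> E y c \<and> E y d) \<or> (\<phi> y = 3 \<and> \<not> E y a \<and> \<not> E y b \<and> E y c \<and> \<not> E y d) \<or> (\<phi> y = 4 \<and> E y a \<and> \<not> E y b \<and> \<not> E y c \<and> E y d)" using pat[OF xy(2)] by blast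
        show "E x y \<longleftrightarrow> c5 (\<phi> x) (\<phi> y)" using px
        proof (elim disjE conjE)
          assume xi: "\<phi> x = 0" "\<not> E x a" "E x b" "\<not> E x c" "\<not> E x d"
          show ?thesis using py
          proof (elim disjE conjE)
            assume yj: "\<phi> y = 0" "\<not> E y a" "E y b" "\<not> E y c" "\<not> E y d"
            have "\<not> c5 0 0" by (simp add: c5_iff)
            moreover have "\<not> E x y" proof assume "E x y" then show False using NT[of x y b] xi yj P Pm by (auto simp: sym) qed
            ultimately show ?thesis using xi yj by simp
          next
            assume yj: "\<phi> y = 1" "E y a" "\<not> E y b" "E y c" "\<not> E y d"
            have "c5 0 1" by (simp add: c5_iff)
            moreover have "E x y" proof (rule ccontr) assume "\<not> E x y" then show False using NK[of x b a y d] xi yj P Pm by (auto simp: sym) qed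
            ultimately show ?thesis using xi yj by simp
          next
            assume yj: "\<phi> y = 2" "\<not> E y a" "E y b" "\<not> E y c" "E y d"
            have "\<not> c5 0 2" by (simp add: c5_iff)
            moreover have "\<not> E x y" proof assume "E x y" then show False using NT[of x y b] xi yj P Pm by (auto simp: sym) qed
            ultimately show ?thesis using xi yj by simp
          next
            assume yj: "\<phi> y = 3" "\<not> E y a" "\<not> E y b" "E y c" "\<not> E y d"
            have "\<not> c5 0 3" by (simp add: c5_iff)
            moreover have "\<not> E x y" proof assume "E x y" then show False using NK[of a b x y d] xi yj P Pm by (auto simp: sym) qed
            ultimately show ?thesis using xi yj by simp
          next
            assume yj: "\<phi> y = 4" "E y a" "\<not> E y b" "\<not> E y c" "E y d"
            have "c5 0 4" by (simp add: c5_iff)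
            moreover have "E x y" proof (rule ccontr) assume "\<not> E x y" then show False using N2[of y d x b] xi yj P Pm by (auto simp: sym) qed
            ultimately show ?thesis using xi yj by simp
          qed
        next
          assume xi: "\<phi> x = 1" "E x a" "\<not> E x b" "E x c" "\<not> E x d"
          show ?thesis using py
          proof (elim disjE conjE)
            assume yj: "\<phi> y = 0" "\<not> E y a" "E y b" "\<not> E y c" "\<not> E y d"
            have "c5 1 0" by (simp add: c5_iff)
            moreover have "E x y" proof (rule ccontr) assume "\<not> E x y" then show False using NK[of y b a x d] xi yj P Pm by (auto simp: sym) qed
            ultimately show ?thesis using xi yj by simp
          next
            assume yj: "\<phi> y = 1" "E y a" "\<not> E y b" "E y c" "\<not> E y d"
            have "\<not> c5 1 1" by (simp add: c5_iff)
            moreover have "\<not> E x y" proof assume "E x y" then show False using NT[of x y a] xi yj P Pm by (auto simp: sym) qed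
            ultimately show ?thesis using xi yj by simp
          next
            assume yj: "\<phi> y = 2" "\<not> E y a" "E y b" "\<not> E y c" "E y d"
            have "c5 1 2" by (simp add: c5_iff)
            moreover have "E x y" proof (rule ccontr) assume "\<not> E x y" then show False using N2[of x a y d] xi yj P Pm by (auto simp: sym) qed
            ultimately show ?thesis using xi yj by simp
          next
            assume yj: "\<phi> y = 3" "\<not> E y a" "\<not> E y b" "E y c" "\<not> E y d"
            have "\<not> c5 1 3" by (simp add: c5_iff)
            moreover have "\<not> E x y" proof assume "E x y" then show False using NT[of x y c] xi yj P Pm by (auto simp: sym) qed
            ultimately show ?thesis using xi yj by simp
          next
            assume yj: "\<phi> y = 4" "E y a" "\<not> E y b" "\<not> E y c" "E y d"
            have "\<not> c5 1 4" by (simp add: c5_iff)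
            moreover have "\<not> E x y" proof assume "E x y" then show False using NT[of x y a] xi yj P Pm by (auto simp: sym) qed
            ultimately show ?thesis using xi yj by simp
          qed
        next
          assume xi: "\<phi> x = 2" "\<not> E x a" "E x b" "\<not> E x c" "E x d"
          show ?thesis using py
          proof (elim disjE conjE)
            assume yj: "\<phi> y = 0" "\<not> E y a" "E y b" "\<not> E y c" "\<not> E y d"
            have "\<not> c5 2 0" by (simp add: c5_iff)
            moreover have "\<not> E x y" proof assume "E x y" then show False using NT[of x y b] xi yj P Pm by (auto simp: sym) qed
            ultimately show ?thesis using xi yj by simp
          next
            assume yj: "\<phi> y = 1" "E y a" "\<not> E y b" "E y c" "\<not> E y d"
            have "c5 2 1" by (simp add: c5_iff)
            moreover have "E x y" proof (rule ccontr) assume "\<not> E x y" then show False using N2[of y a x d] xi yj P Pm by (auto simp: sym) qed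
            ultimately show ?thesis using xi yj by simp
          next
            assume yj: "\<phi> y = 2" "\<not> E y a" "E y b" "\<not> E y c" "E y d"
            have "\<not> c5 2 2" by (simp add: c5_iff)
            moreover have "\<not> E x y" proof assume "E x y" then show False using NT[of x y b] xi yj P Pm by (auto simp: sym) qed
            ultimately show ?thesis using xi yj by simp
          next
            assume yj: "\<phi> y = 3" "\<not> E y a" "\<not> E y b" "E y c" "\<not> E y d"
            have "c5 2 3" by (simp add: c5_iff)
            moreover have "E x y" proof (rule ccontr) assume "\<not> E x y" then show False using NK[of y c d x a] xi yj P Pm by (auto simp: sym) qed
            ultimately show ?thesis using xi yj by simp
          next
            assume yj: "\<phi> y = 4" "E y a" "\<not> E y b" "\<not> E y c" "E y d"
            have "\<not> c5 2 4" by (simp add: c5_iff)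
            moreover have "\<not> E x y" proof assume "E x y" then show False using NT[of x y d] xi yj P Pm by (auto simp: sym) qed
            ultimately show ?thesis using xi yj by simp
          qed
        next
          assume xi: "\<phi> x = 3" "\<not> E x a" "\<not> E x b" "E x c" "\<not> E x d"
          show ?thesis using py
          proof (elim disjE conjE)
            assume yj: "\<phi> y = 0" "\<not> E y a" "E y b" "\<not> E y c" "\<not> E y d"
            have "\<not> c5 3 0" by (simp add: c5_iff)
            moreover have "\<not> E x y" proof assume "E x y" then show False using NK[of a b y x d] xi yj P Pm by (auto simp: sym) qed
            ultimately show ?thesis using xi yj by simp
          next
            assume yj: "\<phi> y = 1" "E y a" "\<not> E y b" "E y c" "\<not> E y d"
            have "\<not> c5 3 1" by (simp add: c5_iff)
            moreover have "\<not> E x y" proof assume "E x y" then show False using NT[of x y c] xi yj P Pm by (auto simp: sym) qed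
            ultimately show ?thesis using xi yj by simp
          next
            assume yj: "\<phi> y = 2" "\<not> E y a" "E y b" "\<not> E y c" "E y d"
            have "c5 3 2" by (simp add: c5_iff)
            moreover have "E x y" proof (rule ccontr) assume "\<not> E x y" then show False using NK[of x c d y a] xi yj P Pm by (auto simp: sym) qed
            ultimately show ?thesis using xi yj by simp
          next
            assume yj: "\<phi> y = 3" "\<not> E y a" "\<not> E y b" "E y c" "\<not> E y d"
            have "\<not> c5 3 3" by (simp add: c5_iff)
            moreover have "\<not> E x y" proof assume "E x y" then show False using NT[of x y c] xi yj P Pm by (auto simp: sym) qed
            ultimately show ?thesis using xi yj by simp
          next
            assume yj: "\<phi> y = 4" "E y a" "\<not> E y b" "\<not> E y c" "E y d"
            have "c5 3 4" by (simp add: c5_iff)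
            moreover have "E x y" proof (rule ccontr) assume "\<not> E x y" then show False using N2[of x c y a] xi yj P Pm by (auto simp: sym) qed
            ultimately show ?thesis using xi yj by simp
          qed
        next
          assume xi: "\<phi> x = 4" "E x a" "\<not> E x b" "\<not> E x c" "E x d"
          show ?thesis using py
          proof (elim disjE conjE)
            assume yj: "\<phi> y = 0" "\<not> E y a" "E y b" "\<not> E y c" "\<not> E y d"
            have "c5 4 0" by (simp add: c5_iff)
            moreover have "E x y" proof (rule ccontr) assume "\<not> E x y" then show False using N2[of x d y b] xi yj P Pm by (auto simp: sym) qed
            ultimately show ?thesis using xi yj by simp
          next
            assume yj: "\<phi> y = 1" "E y a" "\<not> E y b" "E y c" "\<not> E y d"
            have "\<not> c5 4 1" by (simp add: c5_iff)
            moreover have "\<not> E x y" proof assume "E x y" then show False using NT[of x y a] xi yj P Pm by (auto simp: sym) qed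
            ultimately show ?thesis using xi yj by simp
          next
            assume yj: "\<phi> y = 2" "\<not> E y a" "E y b" "\<not> E y c" "E y d"
            have "\<not> c5 4 2" by (simp add: c5_iff)
            moreover have "\<not> E x y" proof assume "E x y" then show False using NT[of x y d] xi yj P Pm by (auto simp: sym) qed
            ultimately show ?thesis using xi yj by simp
          next
            assume yj: "\<phi> y = 3" "\<not> E y a" "\<not> E y b" "E y c" "\<not> E y d"
            have "c5 4 3" by (simp add: c5_iff)
            moreover have "E x y" proof (rule ccontr) assume "\<not> E x y" then show False using N2[of y c x a] xi yj P Pm by (auto simp: sym) qed
            ultimately show ?thesis using xi yj by simp
          next
            assume yj: "\<phi> y = 4" "E y a" "\<not> E y b" "\<not> E y c" "E y d"
            have "\<not> c5 4 4" by (simp add: c5_iff)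
            moreover have "\<not> E x y" proof assume "E x y" then show False using NT[of x y a] xi yj P Pm by (auto simp: sym) qed
            ultimately show ?thesis using xi yj by simp
          qed
        qed

    qed
  next
    case False
    then have NP: "\<And>a b c d. E a b \<Longrightarrow> E b c \<Longrightarrow> E c d \<Longrightarrow> E a c \<or> E b d \<or> E a d" by blast
    show ?thesis
    proof (cases "\<exists>u v. E u v")
      case False
      then show ?thesis by (intro exI[of _ "\<lambda>_. 0"]) (auto simp: c5_iff)
    next
      case True
      then obtain u v where uv: "E u v" by blast
      define \<phi> where "\<phi> x = (if E x u then 1 else if E x v then 0 else (3::nat))" for x
      show ?thesis
      proof (rule exI[of _ \<phi>], intro conjI ballI)
        fix x assume "x \<in> V" then show "\<phi> x < 5" unfolding \<phi>_def by auto
      next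
        fix x y assume xy: "x \<in> V" "y \<in> V"
        show "E x y \<longleftrightarrow> c5 (\<phi> x) (\<phi> y)"
          using NT[of x u v] NT[of y u v] NT[of x y u] NT[of x y v] irr[of x] uv
            NP[of x u v y] NP[of y u v x] NP[of x y u v] NP[of x y v u] NP[of y x u v] NP[of y x v u]
            N2[of x y u v]
          unfolding \<phi>_def by (auto simp: c5_iff sym)
      qed
    qed
  qed
  then show "\<exists>\<phi>. full_C5_colouring G \<phi>"
    unfolding full_C5_colouring_def V5 E_def V_def by auto
qed

end
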